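(* Let $G$ be a connected graph, let $e=\{x,y\}$ and $f=\{u,v\}$ be edges of $G$, and consider the edges $e_{\bar{x}}=\{\bar{x},\overline{xy}\}$ and $f_{\bar{u}}=\{\bar{u},\overline{uv}\}$ of the full subdivision $S(G)$. If $e_{\bar{x}}\,\Theta_{S(G)}\,f_{\bar{u}}$, then $e\,\Theta_G\,f$.
   Context: For a connected graph $H$ with shortest-path distance $d_H$, two edges $\{x,y\}$ and $\{u,v\}$ of $H$ are in relation $\Theta_H$ (the Djoković–Winkler relation) if $d_H(x,u)+d_H(y,v)\neq d_H(x,v)+d_H(y,u)$. The full subdivision $S(G)$ of $G$ is obtained by subdividing every edge of $G$ exactly once; the vertex of $S(G)$ corresponding to a vertex $x$ of $G$ is denoted $\bar{x}$, and the new vertex subdividing the edge $\{x,y\}$ is denoted $\overline{xy}$. For an edge $e=\{x,y\}$ of $G$, $e_{\bar{x}}$ denotes the edge $\{\bar{x},\overline{xy}\}$ of $S(G)$ and $e_{\bar{y}}$ the edge $\{\bar{y},\overline{xy}\}$. *)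

theory Defs
  imports Main
begin

definition graph :: "'a set \<Rightarrow> 'a set set \<Rightarrow> bool" where
  "graph V E \<longleftrightarrow> (\<forall>e\<in>E. \<exists>x y. x \<noteq> y \<and> x \<in> V \<and> y \<in> V \<and> e = {x, y})"

definition walk :: "'a set \<Rightarrow> 'a set set \<Rightarrow> 'a list \<Rightarrow> 'a \<Rightarrow> 'a \<Rightarrow> nat \<Rightarrow> bool" where
  "walk V E p a b n \<longleftrightarrow> length p = Suc n \<and> p ! 0 = a \<and> p ! n = b \<and> set p \<subseteq> V \<and>
     (\<forall>i<n. {p ! i, p ! Suc i} \<in> E)"

definition connected :: "'a set \<Rightarrow> 'a set set \<Rightarrow> bool" where
  "connected V E \<longleftrightarrow> V \<noteq> {} \<and> (\<forall>a\<in>V. \<forall>b\<in>V. \<exists>p n. walk V E p a b n)"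

definition dist :: "'a set \<Rightarrow> 'a set set \<Rightarrow> 'a \<Rightarrow> 'a \<Rightarrow> nat" where
  "dist V E a b = (LEAST n. \<exists>p. walk V E p a b n)"

definition Theta :: "'a set \<Rightarrow> 'a set set \<Rightarrow> 'a set \<Rightarrow> 'a set \<Rightarrow> bool" where
  "Theta V E e f \<longleftrightarrow> e \<in> E \<and> f \<in> E \<and>
     (\<exists>x y u v. e = {x, y} \<and> f = {u, v} \<and>
        dist V E x u + dist V E y v \<noteq> dist V E x v + dist V E y u)"

text \<open>Full subdivision S(G): vertex x of G is Inl x, the subdivision vertex of edge e is Inr e.\<close>
definition subdiv_V :: "'a set \<Rightarrow> 'a set set \<Rightarrow> ('a + 'a set) set" where
  "subdiv_V V E = Inl ` V \<union> Inr ` E"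

definition subdiv_E :: "'a set \<Rightarrow> 'a set set \<Rightarrow> ('a + 'a set) set set" where
  "subdiv_E V E = {{Inl x, Inr e} | x e. e \<in> E \<and> x \<in> e}"

end

theory Submission
  imports Defs
begin


definition wlk :: "'a set \<Rightarrow> 'a set set \<Rightarrow> 'a \<Rightarrow> 'a \<Rightarrow> nat \<Rightarrow> bool" where
  "wlk V E a b n \<longleftrightarrow> (\<exists>p. walk V E p a b n)"

lemma wlk_V: "wlk V E a b n \<Longrightarrow> a \<in> V \<and> b \<in> V"
  unfolding wlk_def walk_def by (auto intro!: nth_mem)

lemma wlk0: "a \<in> V \<Longrightarrow> wlk V E a a 0"
  unfolding wlk_def walk_def by (rule exI[of _ "[a]"]) auto

lemma wlk0_eq: "wlk V E a b 0 \<Longrightarrow> a = b"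
  unfolding wlk_def walk_def by auto

lemma walk_snoc:
  assumes "walk V E p a b n" "{b,c} \<in> E" "c \<in> V"
  shows "walk V E (p@[c]) a c (Suc n)"
proof -
  have L: "length p = Suc n" and b: "p ! n = b" using assms(1) unfolding walk_def by auto
  show ?thesis unfolding walk_def
  proof (intro conjI allI impI)
    fix i assume i: "i < Suc n"
    show "{(p @ [c]) ! i, (p @ [c]) ! Suc i} \<in> E"
    proof (cases "i < n")
      case True
      then show ?thesis using assms(1) L unfolding walk_def by (auto simp: nth_append)
    next
      case False
      then have "i = n" using i by simp
      then show ?thesis using L b assms(2) by (simp add: nth_append)
    qed
  qed (use assms L in \<open>auto simp: walk_def nth_append\<close>)
qed

lemma wlk_snoc:
  assumes "wlk V E a b n" "{b,c} \<in> E" "c \<in> V"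
  shows "wlk V E a c (Suc n)"
proof -
  from assms(1) obtain p where "walk V E p a b n" unfolding wlk_def by (elim exE)
  then have "walk V E (p@[c]) a c (Suc n)" by (rule walk_snoc[OF _ assms(2,3)])
  then show ?thesis unfolding wlk_def by (rule exI)
qed

lemma wlk_snoc_inv:
  assumes "wlk V E a b (Suc n)"
  shows "\<exists>c. wlk V E a c n \<and> {c,b} \<in> E"
proof -
  from assms obtain p where p: "walk V E p a b (Suc n)" unfolding wlk_def by (elim exE)
  have L: "length p = Suc (Suc n)" using p unfolding walk_def by simp
  have "walk V E (butlast p) a (p!n) n"
    unfolding walk_def using p L
    by (auto simp: walk_def nth_butlast dest: in_set_butlastD)
  moreover have "{p!n, b} \<in> E" using p unfolding walk_def by auto
  ultimately show ?thesis unfolding wlk_def by (intro exI conjI)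
qed

lemma wlk_edge: "{a,b} \<in> E \<Longrightarrow> a \<in> V \<Longrightarrow> b \<in> V \<Longrightarrow> wlk V E a b 1"
proof -
  assume e: "{a,b} \<in> E" and a: "a \<in> V" and b: "b \<in> V"
  have "wlk V E a b (Suc 0)" by (rule wlk_snoc[OF wlk0[OF a] e b])
  then show ?thesis by simp
qed

lemma wlk_trans: "wlk V E b c m \<Longrightarrow> wlk V E a b n \<Longrightarrow> wlk V E a c (n+m)"
proof (induction m arbitrary: c)
  case 0
  from 0(1) have "b = c" by (rule wlk0_eq)
  then show ?case using 0 by simp
next
  case (Suc m)
  obtain d where d: "wlk V E b d m" "{d,c} \<in> E" using wlk_snoc_inv[OF Suc.prems(1)] by blast
  have "c \<in> V" using wlk_V[OF Suc.prems(1)] by blast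
  have "wlk V E a c (Suc (n + m))" by (rule wlk_snoc[OF Suc.IH[OF d(1) Suc.prems(2)] d(2) \<open>c \<in> V\<close>])
  then show ?case by simp
qed

lemma wlk_sym: "wlk V E a b n \<Longrightarrow> wlk V E b a n"
proof (induction n arbitrary: b)
  case 0
  from 0(1) have "a = b" by (rule wlk0_eq)
  then show ?case using 0 by simp
next
  case (Suc n)
  obtain c where c: "wlk V E a c n" "{c,b} \<in> E" using wlk_snoc_inv[OF Suc.prems] by blast
  have bV: "b \<in> V" using wlk_V[OF Suc.prems] by (rule conjunct2)
  have cV: "c \<in> V" using wlk_V[OF c(1)] by (rule conjunct2)
  have bc: "{b,c} \<in> E" using c(2) by (subst insert_commute)
  have "wlk V E b c 1" by (rule wlk_edge[OF bc bV cV])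
  from wlk_trans[OF Suc.IH[OF c(1)] this] show ?case by simp
qed

lemma dist_le: "wlk V E a b n \<Longrightarrow> dist V E a b \<le> n"
  unfolding dist_def wlk_def by (auto intro: Least_le)

lemma dist_wlk: "wlk V E a b n \<Longrightarrow> wlk V E a b (dist V E a b)"
  unfolding dist_def wlk_def by (rule LeastI_ex) blast

definition lip :: "'a set set \<Rightarrow> ('a \<Rightarrow> nat) \<Rightarrow> bool" where
  "lip E h \<longleftrightarrow> (\<forall>s t. {s,t} \<in> E \<longrightarrow> h s \<le> h t + 1)"

lemma lip_wlk: "wlk V E a b n \<Longrightarrow> lip E h \<Longrightarrow> h b \<le> h a + n \<and> h a \<le> h b + n"
proof (induction n arbitrary: b)
  case 0
  from 0(1) have "a = b" by (rule wlk0_eq)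
  then show ?case by simp
next
  case (Suc n)
  obtain c where c: "wlk V E a c n" "{c,b} \<in> E" using wlk_snoc_inv[OF Suc.prems(1)] by blast
  have cb': "{b,c} \<in> E" using c(2) by (simp add: insert_commute)
  have "h b \<le> h c + 1" "h c \<le> h b + 1" using c(2) cb' Suc.prems(2) unfolding lip_def
    by blast+
  then show ?case using Suc.IH[OF c(1) Suc.prems(2)] by auto
qed

lemma lip_dist: "wlk V E a b n \<Longrightarrow> lip E h \<Longrightarrow> h b \<le> h a + dist V E a b \<and> h a \<le> h b + dist V E a b"
proof -
  assume w: "wlk V E a b n" and l: "lip E h"
  show ?thesis using lip_wlk[OF dist_wlk[OF w] l] .
qed

lemma conn_wlk: "connected V E \<Longrightarrow> a \<in> V \<Longrightarrow> b \<in> V \<Longrightarrow> wlk V E a b (dist V E a b)"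
  unfolding connected_def by (meson dist_wlk wlk_def)

lemma dist_sym: "connected V E \<Longrightarrow> a \<in> V \<Longrightarrow> b \<in> V \<Longrightarrow> dist V E a b = dist V E b a"
proof -
  assume c: "connected V E" and a: "a \<in> V" and b: "b \<in> V"
  have "dist V E b a \<le> dist V E a b" using dist_le[OF wlk_sym[OF conn_wlk[OF c a b]]] .
  moreover have "dist V E a b \<le> dist V E b a" using dist_le[OF wlk_sym[OF conn_wlk[OF c b a]]] .
  ultimately show ?thesis by simp
qed



lemma graph_edge: "graph V E \<Longrightarrow> e \<in> E \<Longrightarrow> z \<in> e \<Longrightarrow> \<exists>z'. z' \<noteq> z \<and> z' \<in> V \<and> z \<in> V \<and> e = {z, z'}"
  unfolding graph_def by fastforce

lemma graph_ne: "graph V E \<Longrightarrow> {x,y} \<in> E \<Longrightarrow> x \<noteq> y \<and> x \<in> V \<and> y \<in> V"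
  using graph_edge[of V E "{x,y}" x] by auto

lemma G_lip:
  assumes g: "graph V E" and c: "connected V E" and w: "w \<in> V"
  shows "lip E (\<lambda>z. dist V E w z)"
  unfolding lip_def
proof (intro allI impI)
  fix s t assume st: "{s,t} \<in> E"
  then have "s \<in> V" "t \<in> V" using graph_ne[OF g] by blast+
  then have "wlk V E w s (dist V E w t + 1)"
    using wlk_snoc[OF conn_wlk[OF c w \<open>t \<in> V\<close>]] st by (metis Suc_eq_plus1 insert_commute)
  then show "dist V E w s \<le> dist V E w t + 1" by (rule dist_le)
qed

lemma S_edge_iff: "{s,t} \<in> subdiv_E V E \<longleftrightarrow> (\<exists>z e. e \<in> E \<and> z \<in> e \<and> ((s = Inl z \<and> t = Inr e) \<or> (s = Inr e \<and> t = Inl z)))"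
  unfolding subdiv_E_def by (auto simp: doubleton_eq_iff)

definition hS :: "'a set \<Rightarrow> 'a set set \<Rightarrow> 'a \<Rightarrow> ('a + 'a set) \<Rightarrow> nat" where
  "hS V E w t = (case t of Inl z \<Rightarrow> 2 * dist V E w z | Inr e \<Rightarrow> 2 * Min ((\<lambda>z. dist V E w z) ` e) + 1)"

lemma hS_Inr: "hS V E w (Inr {p,q}) = 2 * min (dist V E w p) (dist V E w q) + 1"
  unfolding hS_def by simp

lemma hS_Inl: "hS V E w (Inl z) = 2 * dist V E w z"
  unfolding hS_def by simp

lemma S_lip:
  assumes g: "graph V E" and c: "connected V E" and w: "w \<in> V"
  shows "lip (subdiv_E V E) (hS V E w)"
proof -
  have key: "hS V E w (Inl z) \<le> hS V E w (Inr e) + 1 \<and> hS V E w (Inr e) \<le> hS V E w (Inl z) + 1"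
    if ez: "e \<in> E" "z \<in> e" for z e
  proof -
    obtain z' where z': "e = {z,z'}" using graph_edge[OF g ez] by blast
    have "dist V E w z \<le> dist V E w z' + 1" "dist V E w z' \<le> dist V E w z + 1"
      using G_lip[OF g c w] ez z' unfolding lip_def by (metis insert_commute)+
    then show ?thesis unfolding z' hS_Inr hS_Inl by auto
  qed
  show ?thesis unfolding lip_def S_edge_iff using key by fastforce
qed

definition kS :: "'a set \<Rightarrow> 'a set set \<Rightarrow> 'a \<Rightarrow> 'a \<Rightarrow> ('a + 'a set) \<Rightarrow> nat" where
  "kS V E u v t = (if t = Inr {u,v} then 0 else min (hS V E u t) (hS V E v t) + 1)"

lemma kS_lip:
  assumes g: "graph V E" and c: "connected V E" and uv: "{u,v} \<in> E"
  shows "lip (subdiv_E V E) (kS V E u v)"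
proof -
  have u: "u \<in> V" and v: "v \<in> V" using graph_ne[OF g uv] by auto
  have lu: "lip (subdiv_E V E) (hS V E u)" and lv: "lip (subdiv_E V E) (hS V E v)"
    using S_lip[OF g c u] S_lip[OF g c v] by auto
  have duu: "dist V E u u = 0" "dist V E v v = 0" using dist_le[OF wlk0[OF u]] dist_le[OF wlk0[OF v]] by auto
  show ?thesis unfolding lip_def
  proof (intro allI impI)
    fix s t assume st: "{s,t} \<in> subdiv_E V E"
    have a: "hS V E u s \<le> hS V E u t + 1" "hS V E v s \<le> hS V E v t + 1"
      using st lu lv unfolding lip_def by blast+
    have inl: "kS V E u v (Inl z) = 1" if "z \<in> {u,v}" for z
      using that duu unfolding kS_def hS_Inl by auto
    show "kS V E u v s \<le> kS V E u v t + 1"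
    proof (cases "s = Inr {u,v} \<or> t = Inr {u,v}")
      case True
      then show ?thesis
      proof
        assume s: "s = Inr {u,v}"
        then show ?thesis unfolding kS_def by simp
      next
        assume t: "t = Inr {u,v}"
        then obtain z where "s = Inl z" "z \<in> {u,v}" using st unfolding S_edge_iff by auto
        then show ?thesis using inl t unfolding kS_def by simp
      qed
    next
      case False
      then show ?thesis using a unfolding kS_def by auto
    qed
  qed
qed

lemma S_wlk_edge:
  assumes "e \<in> E" "z \<in> e" "z \<in> V"
  shows "wlk (subdiv_V V E) (subdiv_E V E) (Inl z) (Inr e) 1"
    "wlk (subdiv_V V E) (subdiv_E V E) (Inr e) (Inl z) 1"
proof -
  have m: "{Inl z, Inr e} \<in> subdiv_E V E" "{Inr e, Inl z} \<in> subdiv_E V E"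
    using assms unfolding S_edge_iff by auto
  have "Inl z \<in> subdiv_V V E" "Inr e \<in> subdiv_V V E" using assms unfolding subdiv_V_def by auto
  then show "wlk (subdiv_V V E) (subdiv_E V E) (Inl z) (Inr e) 1"
    "wlk (subdiv_V V E) (subdiv_E V E) (Inr e) (Inl z) 1" using m wlk_edge by metis+
qed

lemma S_wlk:
  assumes g: "graph V E"
  shows "wlk V E a b n \<Longrightarrow> wlk (subdiv_V V E) (subdiv_E V E) (Inl a) (Inl b) (2*n)"
proof (induction n arbitrary: b)
  case 0
  then have "a = b" "a \<in> V" using wlk0_eq wlk_V by fastforce+
  then show ?case unfolding subdiv_V_def by (auto intro: wlk0)
next
  case (Suc n)
  obtain c where c: "wlk V E a c n" "{c,b} \<in> E" using wlk_snoc_inv[OF Suc.prems] by blast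
  have cb: "c \<in> V" "b \<in> V" using graph_ne[OF g c(2)] by auto
  have "wlk (subdiv_V V E) (subdiv_E V E) (Inl a) (Inr {c,b}) (2*n + 1)"
    using wlk_trans[OF S_wlk_edge(1)[OF c(2) _ cb(1)] Suc.IH[OF c(1)]] by simp
  from wlk_trans[OF S_wlk_edge(2)[OF c(2) _ cb(2)] this] show ?case by simp
qed



lemma arith_final: "(a::nat) \<le> b + 1 \<Longrightarrow> b \<le> a + 1 \<Longrightarrow> cc \<le> dd + 1 \<Longrightarrow> dd \<le> cc + 1 \<Longrightarrow>
  a \<le> cc + 1 \<Longrightarrow> cc \<le> a + 1 \<Longrightarrow> b \<le> dd + 1 \<Longrightarrow> dd \<le> b + 1 \<Longrightarrow> a + dd = b + cc \<Longrightarrow>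
  2*a + (2 * min (min a b) (min cc dd) + 2) \<noteq> (2 * min a b + 1) + (2 * min a cc + 1) \<Longrightarrow> False"
  by (simp add: min_def split: if_splits)

lemma perm_ineq: "{p, q::'a} = {x',y'} \<Longrightarrow> {r, s} = {u',v'} \<Longrightarrow> p \<noteq> q \<Longrightarrow> r \<noteq> s \<Longrightarrow>
  (dS::'a\<Rightarrow>'a\<Rightarrow>nat) x' u' + dS y' v' \<noteq> dS x' v' + dS y' u' \<Longrightarrow> dS p r + dS q s \<noteq> dS p s + dS q r"
  by (auto simp: doubleton_eq_iff)

theorem lemma3p1:
  fixes V :: "'a set" and E :: "'a set set" and x y u v :: 'a
  assumes "graph V E" and "connected V E"
    and "{x, y} \<in> E" and "{u, v} \<in> E"
    and "Theta (subdiv_V V E) (subdiv_E V E) {Inl x, Inr {x, y}} {Inl u, Inr {u, v}}"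
  shows "Theta V E {x, y} {u, v}"
proof -
  note g = assms(1) and c = assms(2)
  have xy: "x \<noteq> y" "x \<in> V" "y \<in> V" using graph_ne[OF g assms(3)] by auto
  have uv: "u \<noteq> v" "u \<in> V" "v \<in> V" using graph_ne[OF g assms(4)] by auto
  define d where "d = dist V E"
  define VS where "VS = subdiv_V V E"
  define ES where "ES = subdiv_E V E"
  define dS where "dS = dist VS ES"
  define a where "a = d x u"
  define b where "b = d x v"
  define cc where "cc = d y u"
  define dd where "dd = d y v"
  have sym: "d p q = d q p" if "p \<in> V" "q \<in> V" for p q
    unfolding d_def using dist_sym[OF c that] .
  have self: "d p p = 0" if "p \<in> V" for p
    unfolding d_def using dist_le[OF wlk0[OF that]] by simp
  have pos: "d p q \<noteq> 0" if "p \<in> V" "q \<in> V" "p \<noteq> q" for p q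
    unfolding d_def using conn_wlk[OF c that(1,2)] wlk0_eq that(3) by metis
  have one: "d p q \<le> 1" if "{p,q} \<in> E" for p q
    unfolding d_def using dist_le[OF wlk_edge[OF that]] graph_ne[OF g that] by auto
  have adj: "d w p \<le> d w q + 1" if "w \<in> V" "{p,q} \<in> E" for w p q
    using G_lip[OF g c that(1)] that(2) unfolding lip_def d_def by blast
  have goal: "a + dd \<noteq> b + cc"
  proof (cases "{x,y} = {u,v}")
    case True
    then consider "x = u" "y = v" | "x = v" "y = u" by (auto simp: doubleton_eq_iff)
    then show ?thesis
    proof cases
      case 1
      then show ?thesis unfolding a_def b_def cc_def dd_def using self pos xy by auto
    next
      case 2
      then show ?thesis unfolding a_def b_def cc_def dd_def using self pos xy by auto
    qed
  next
    case False
    note ne = False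
    have E3: "{y,x} \<in> E" and E4: "{v,u} \<in> E" using assms(3,4) by (simp_all add: insert_commute)
    have ab: "a \<le> b + 1" "b \<le> a + 1" "cc \<le> dd + 1" "dd \<le> cc + 1"
      unfolding a_def b_def cc_def dd_def
      using adj[OF xy(2) assms(4)] adj[OF xy(2) E4] adj[OF xy(3) assms(4)] adj[OF xy(3) E4] by linarith+
    have ac: "a \<le> cc + 1" "cc \<le> a + 1" "b \<le> dd + 1" "dd \<le> b + 1"
      unfolding a_def b_def cc_def dd_def
      using adj[OF uv(2) assms(3)] adj[OF uv(2) E3] adj[OF uv(3) assms(3)] adj[OF uv(3) E3]
        sym[OF xy(2) uv(2)] sym[OF xy(2) uv(3)] sym[OF xy(3) uv(2)] sym[OF xy(3) uv(3)] by linarith+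
    have SW: "wlk VS ES (Inl p) (Inl q) (2 * d p q)" if "p \<in> V" "q \<in> V" for p q
      unfolding VS_def ES_def d_def using S_wlk[OF g conn_wlk[OF c that]] .
    have SE1: "wlk VS ES (Inl p) (Inr e) 1" "wlk VS ES (Inr e) (Inl p) 1"
      if "e \<in> E" "p \<in> e" "p \<in> V" for p e
      unfolding VS_def ES_def using S_wlk_edge[OF that] by auto
    have SEx: "wlk VS ES (Inl x) (Inr {x,y}) 1" "wlk VS ES (Inr {x,y}) (Inl x) 1"
      "wlk VS ES (Inr {x,y}) (Inl y) 1" "wlk VS ES (Inl u) (Inr {u,v}) 1"
      "wlk VS ES (Inl v) (Inr {u,v}) 1"
      using SE1(1)[OF assms(3) _ xy(2)] SE1(2)[OF assms(3) _ xy(2)] SE1(2)[OF assms(3) _ xy(3)]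
        SE1(1)[OF assms(4) _ uv(2)] SE1(1)[OF assms(4) _ uv(3)] by simp_all
    have dSle: "dS p q \<le> n" if "wlk VS ES p q n" for p q n
      unfolding dS_def using dist_le[OF that] .
    have W1: "wlk VS ES (Inl x) (Inl u) (2*a)" using SW xy uv unfolding a_def by auto
    have hx: "lip ES (hS V E x)" "lip ES (hS V E u)" unfolding ES_def using S_lip[OF g c] xy uv by auto
    have "hS V E x (Inl u) \<le> hS V E x (Inl x) + dS (Inl x) (Inl u)"
      using lip_dist[OF W1 hx(1)] unfolding dS_def by blast
    then have D1: "dS (Inl x) (Inl u) = 2*a"
      using dSle[OF W1] self[OF xy(2)] unfolding hS_Inl d_def a_def by auto
    have W2a: "wlk VS ES (Inl x) (Inr {u,v}) (2*a+1)"
      using wlk_trans[OF SEx(4) W1] by simp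
    have W2b: "wlk VS ES (Inl x) (Inr {u,v}) (2*b+1)"
      using wlk_trans[OF SEx(5) SW[OF xy(2) uv(3)]] unfolding b_def by simp
    have "hS V E x (Inr {u,v}) \<le> hS V E x (Inl x) + dS (Inl x) (Inr {u,v})"
      using lip_dist[OF W2a hx(1)] unfolding dS_def by blast
    then have D2: "dS (Inl x) (Inr {u,v}) = 2 * min a b + 1"
      using dSle[OF W2a] dSle[OF W2b] self[OF xy(2)] unfolding hS_Inl hS_Inr d_def a_def b_def
      by (simp add: min_def split: if_splits)
    have W3a: "wlk VS ES (Inr {x,y}) (Inl u) (2*a+1)"
      using wlk_trans[OF W1 SEx(2)] by simp
    have W3b: "wlk VS ES (Inr {x,y}) (Inl u) (2*cc+1)"
      using wlk_trans[OF SW[OF xy(3) uv(2)] SEx(3)] unfolding cc_def by simp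
    have "hS V E u (Inr {x,y}) \<le> hS V E u (Inl u) + dS (Inr {x,y}) (Inl u)"
      using lip_dist[OF W3a hx(2)] unfolding dS_def by blast
    moreover have "hS V E u (Inr {x,y}) = 2 * min a cc + 1" "hS V E u (Inl u) = 0"
      unfolding hS_Inr hS_Inl a_def cc_def d_def[symmetric]
      using sym[OF xy(2) uv(2)] sym[OF xy(3) uv(2)] self[OF uv(2)] by simp_all
    ultimately have D3: "dS (Inr {x,y}) (Inl u) = 2 * min a cc + 1"
      using dSle[OF W3a] dSle[OF W3b] by (simp add: min_def split: if_splits)
    have W4a: "wlk VS ES (Inr {x,y}) (Inr {u,v}) (2*a+2)"
      using wlk_trans[OF SEx(4) W3a] by simp
    have W4c: "wlk VS ES (Inr {x,y}) (Inr {u,v}) (2*cc+2)"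
      using wlk_trans[OF SEx(4) W3b] by simp
    have W4b: "wlk VS ES (Inr {x,y}) (Inr {u,v}) (2*b+2)"
      using wlk_trans[OF W2b SEx(2)] by simp
    have W4d: "wlk VS ES (Inr {x,y}) (Inr {u,v}) (2*dd+2)"
      using wlk_trans[OF SEx(5) wlk_trans[OF SW[OF xy(3) uv(3)] SEx(3)]] unfolding dd_def by simp
    have kl: "lip ES (kS V E u v)" unfolding ES_def using kS_lip[OF g c assms(4)] .
    have "kS V E u v (Inr {x,y}) \<le> kS V E u v (Inr {u,v}) + dS (Inr {x,y}) (Inr {u,v})"
      using lip_dist[OF W4a kl] unfolding dS_def by blast
    moreover have "kS V E u v (Inr {x,y}) = min (2 * min a cc + 1) (2 * min b dd + 1) + 1"
      "kS V E u v (Inr {u,v}) = 0"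
      using ne unfolding kS_def hS_Inr a_def b_def cc_def dd_def d_def[symmetric]
      using sym[OF xy(2) uv(2)] sym[OF xy(3) uv(2)] sym[OF xy(2) uv(3)] sym[OF xy(3) uv(3)] by simp_all
    ultimately have D4: "dS (Inr {x,y}) (Inr {u,v}) = 2 * min (min a b) (min cc dd) + 2"
      using dSle[OF W4a] dSle[OF W4b] dSle[OF W4c] dSle[OF W4d] by (simp add: min_def split: if_splits)
    obtain x' y' u' v' where th: "{Inl x, Inr {x,y}} = {x',y'}" "{Inl u, Inr {u,v}} = {u',v'}"
      "dS x' u' + dS y' v' \<noteq> dS x' v' + dS y' u'"
    proof -
      from assms(5)[unfolded Theta_def] have "\<exists>x' y' u' v'. {Inl x, Inr {x,y}} = {x',y'} \<and> {Inl u, Inr {u,v}} = {u',v'} \<and>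
        dist (subdiv_V V E) (subdiv_E V E) x' u' + dist (subdiv_V V E) (subdiv_E V E) y' v' \<noteq>
        dist (subdiv_V V E) (subdiv_E V E) x' v' + dist (subdiv_V V E) (subdiv_E V E) y' u'" by (rule conjunct2[OF conjunct2])
      then show ?thesis
        apply (elim exE conjE)
        apply (rule that)
          apply assumption
         apply assumption
        apply (simp add: dS_def VS_def ES_def)
        done
    qed
    have H: "dS (Inl x) (Inl u) + dS (Inr {x,y}) (Inr {u,v}) \<noteq> dS (Inl x) (Inr {u,v}) + dS (Inr {x,y}) (Inl u)"
      by (rule perm_ineq[OF th(1) th(2) _ _ th(3)]) auto
    show ?thesis
    proof
      assume "a + dd = b + cc"
      from arith_final[OF ab(1,2,3,4) ac(1,2,3,4) this] show False using H unfolding D1 D2 D3 D4 by blast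
    qed
  qed
  show ?thesis unfolding Theta_def
    apply (intro conjI assms(3,4))
    apply (rule exI[of _ x], rule exI[of _ y], rule exI[of _ u], rule exI[of _ v])
    using goal unfolding a_def b_def cc_def dd_def d_def by simp
qed

end
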